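(* Let $\Gamma\in\mathbb{R}^{n\times m}$ and let $R:\mathbb{R}^n_{\ge0}\to\mathbb{R}^m$ be locally Lipschitz such that $\dot S=\Gamma R(S)$ leaves $\mathbb{R}^n_{\ge0}$ invariant and is forward complete. For $\sigma\in\mathbb{R}^n_{\ge0}$ consider $\dot x=f_\sigma(x):=R(\sigma+\Gamma x)$ on $X_\sigma=\{x\in\mathbb{R}^m:\sigma+\Gamma x\ge0\}$. Suppose that: (1) $\Gamma$ has rank $m-1$, with kernel spanned by a unit vector all of whose entries are positive; (2) every solution of $\dot S=\Gamma R(S)$ in $\mathbb{R}^n_{\ge0}$ is bounded; (3) $\sigma\in\mathbb{R}^n_{\ge0}$ is such that $\dot x=f_\sigma(x)$ on $X_\sigma$ is strongly monotone with respect to the order induced by the cone $\mathbb{R}^m_{\ge0}$ (i.e. if $\xi_1\ge\xi_2$, $\xi_1\ne\xi_2$, then every component of $\varphi_t(\xi_1)-\varphi_t(\xi_2)$ is strictly positive for all $t>0$). Then there is $\zeta=\zeta_\sigma\in\mathbb{R}^n_{\ge0}$ such that for each $\rho\in\mathbb{R}^n_{\ge0}$ with $\rho-\sigma\in\operatorname{Image}(\Gamma)$, the solution $S$ of $\dot S=\Gamma R(S)$ with $S(0)=\rho$ satisfies $S(t)\to\zeta$ as $t\to\infty$.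
   Context: Inequalities between vectors are componentwise; $\varphi_t$ denotes the flow of $\dot x=f_\sigma(x)$ on $X_\sigma$. *)

theory Defs
  imports "HOL-Analysis.Analysis"
begin

definition nonneg_orthant :: "(real^'n) set" where
  "nonneg_orthant = {x. \<forall>i. 0 \<le> x $ i}"

definition loc_lipschitz_on :: "('a::metric_space) set \<Rightarrow> ('a \<Rightarrow> 'b::metric_space) \<Rightarrow> bool" where
  "loc_lipschitz_on D R \<longleftrightarrow> (\<forall>x\<in>D. \<exists>e>0. \<exists>L. L-lipschitz_on (cball x e \<inter> D) R)"

definition fwd_solution :: "('a::real_normed_vector \<Rightarrow> 'a) \<Rightarrow> 'a set \<Rightarrow> 'a \<Rightarrow> (real \<Rightarrow> 'a) \<Rightarrow> bool" where
  "fwd_solution F D x0 x \<longleftrightarrow> x 0 = x0 \<and>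
     (\<forall>t\<ge>0. x t \<in> D \<and> (x has_vector_derivative F (x t)) (at t within {0..}))"

end

theory Submission
  imports Defs
begin


locale crn =
  fixes G :: "real^'m^'n" and R :: "real^'n \<Rightarrow> real^'m" and \<sigma> :: "real^'n" and v :: "real^'m"
  assumes vpos: "\<And>i. 0 < v $ i" and vnorm: "norm v = 1" and ker: "{x. G *v x = 0} = span {v}"
begin

definition up :: "real^'m \<Rightarrow> real" where "up a = Max (range (\<lambda>i. a$i / v$i))"
definition lo :: "real^'m \<Rightarrow> real" where "lo a = Min (range (\<lambda>i. a$i / v$i))"
definition osc :: "real^'m \<Rightarrow> real" where "osc a = up a - lo a"

lemma fin: "finite (range (\<lambda>i. a$i / v$i))" by simp

lemma up_le_iff: "up a \<le> c \<longleftrightarrow> (\<forall>i. a$i / v$i \<le> c)"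
  unfolding up_def using fin by (subst Max_le_iff) auto
lemma up_less_iff: "up a < c \<longleftrightarrow> (\<forall>i. a$i / v$i < c)"
  unfolding up_def using fin by (subst Max_less_iff) auto
lemma le_lo_iff: "c \<le> lo a \<longleftrightarrow> (\<forall>i. c \<le> a$i / v$i)"
  unfolding lo_def using fin by (subst Min_ge_iff) auto
lemma less_lo_iff: "c < lo a \<longleftrightarrow> (\<forall>i. c < a$i / v$i)"
  unfolding lo_def using fin by (subst Min_gr_iff) auto
lemma up_ge: "a$i / v$i \<le> up a" using up_le_iff by blast
lemma lo_le: "lo a \<le> a$i / v$i" using le_lo_iff by blast

lemma le_up: "a$i \<le> up a * v$i"
  using up_ge[of a i] vpos[of i] by (simp add: divide_le_eq)
lemma lo_le': "lo a * v$i \<le> a$i"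
  using lo_le[of a i] vpos[of i] by (simp add: le_divide_eq)

lemma osc_nonneg: "0 \<le> osc a"
  unfolding osc_def using up_ge[of a] lo_le[of a] by (meson diff_ge_0_iff_ge order_trans)

lemma up_add: "up (a + b) \<le> up a + up b"
  unfolding up_le_iff using up_ge[of a] up_ge[of b] by (simp add: add_divide_distrib add_mono)
lemma lo_add: "lo a + lo b \<le> lo (a + b)"
  unfolding le_lo_iff using lo_le[of a] lo_le[of b] by (simp add: add_divide_distrib add_mono)
lemma osc_add: "osc (a + b) \<le> osc a + osc b"
  unfolding osc_def using up_add[of a b] lo_add[of a b] by linarith

lemma up_uminus: "up (- a) = - lo a"
proof (rule antisym)
  show "up (- a) \<le> - lo a" unfolding up_le_iff using lo_le[of a] by simp
  have "\<forall>i. - up (-a) \<le> a$i / v$i" using up_ge[of "-a"] by (simp add: minus_le_iff)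
  then have "- up (-a) \<le> lo a" by (rule le_lo_iff[THEN iffD2])
  then show "- lo a \<le> up (- a)" by linarith
qed
lemma lo_uminus: "lo (- a) = - up a"
  using up_uminus[of "-a"] by simp
lemma osc_uminus: "osc (- a) = osc a"
  unfolding osc_def up_uminus lo_uminus by simp
lemma osc_commute: "osc (a - b) = osc (b - a)"
  using osc_uminus[of "a - b"] by simp
lemma osc_diff: "osc (a - b) \<le> osc a + osc b"
  using osc_add[of a "-b"] osc_uminus[of b] by simp

lemma up_shift: "up (a + c *\<^sub>R v) = up a + c"
proof -
  have e: "(a + c *\<^sub>R v)$i / v$i = a$i / v$i + c" for i
    using vpos[of i] by (simp add: add_divide_distrib)
  show ?thesis
  proof (rule antisym)
    show "up (a + c *\<^sub>R v) \<le> up a + c" unfolding up_le_iff e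
      using up_ge[of a] by simp
    have "\<forall>i. a$i / v$i \<le> up (a + c *\<^sub>R v) - c" using up_ge[of "a + c *\<^sub>R v"] e by (simp add: le_diff_eq)
    then have "up a \<le> up (a + c *\<^sub>R v) - c" by (rule up_le_iff[THEN iffD2])
    then show "up a + c \<le> up (a + c *\<^sub>R v)" by linarith
  qed
qed
lemma lo_shift: "lo (a + c *\<^sub>R v) = lo a + c"
proof -
  have "lo (a + c *\<^sub>R v) = - up (-a + (-c) *\<^sub>R v)"
    by (metis up_uminus minus_add_distrib scaleR_minus_left minus_minus)
  then show ?thesis by (simp only: up_shift up_uminus)
qed
lemma osc_shift: "osc (a + c *\<^sub>R v) = osc a"
  unfolding osc_def up_shift lo_shift by simp
lemma osc_zero: "osc 0 = 0" unfolding osc_def up_def lo_def by simp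
lemma osc_smult_v: "osc (c *\<^sub>R v) = 0" using osc_shift[of 0 c] osc_zero by simp

lemma Gv: "G *v v = 0"
  using ker span_base[of v "{v}"] by auto

lemma le_up_add: "\<xi>$i \<le> \<eta>$i + up (\<xi> - \<eta>) * v$i"
  using le_up[of "\<xi> - \<eta>" i] by simp
lemma lo_le_add: "\<eta>$i + lo (\<xi> - \<eta>) * v$i \<le> \<xi>$i"
  using lo_le'[of "\<xi> - \<eta>" i] by simp

lemma osc_le_up_lo: "osc a \<le> c" if "\<And>i. a$i / v$i \<le> cp" "\<And>i. cq \<le> a$i / v$i" "cp - cq \<le> c"
proof -
  have "up a \<le> cp" using that(1) up_le_iff by blast
  moreover have "cq \<le> lo a" using that(2) le_lo_iff by blast
  ultimately show ?thesis unfolding osc_def using that(3) by linarith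
qed

lemma G_le_osc: "\<exists>K>0. \<forall>a. norm (G *v a) \<le> K * osc a"
proof -
  obtain K where K: "K > 0" "\<And>x. norm (G *v x) \<le> norm x * K"
    using bounded_linear.pos_bounded[OF matrix_vector_mul_bounded_linear[of G]] by blast
  have "norm (G *v a) \<le> K * osc a" for a
  proof -
    define b where "b = a - lo a *\<^sub>R v"
    have Gb: "G *v b = G *v a"
      unfolding b_def by (simp add: matrix_vector_mult_diff_distrib matrix_vector_mult_scaleR Gv)
    have "\<bar>b$i\<bar> \<le> \<bar>(osc a *\<^sub>R v)$i\<bar>" for i
    proof -
      have "0 \<le> b$i" using lo_le'[of a i] unfolding b_def by simp
      moreover have "b$i \<le> osc a * v$i" using le_up[of a i] unfolding b_def osc_def
        by (simp add: left_diff_distrib)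
      moreover have "0 \<le> osc a * v$i" using osc_nonneg[of a] vpos[of i] by simp
      ultimately show ?thesis by simp
    qed
    then have "norm b \<le> norm (osc a *\<^sub>R v)" by (intro norm_le_componentwise_cart) simp
    also have "\<dots> = osc a" using vnorm osc_nonneg[of a] by simp
    finally have "norm b \<le> osc a" .
    then show ?thesis using K(2)[of b] Gb K(1) by (metis mult.commute mult_left_mono order_trans less_imp_le)
  qed
  then show ?thesis using K(1) by blast
qed

lemma osc_le_G: "\<exists>K>0. \<forall>a. osc a \<le> K * norm (G *v a)"
proof -
  have inj: "\<forall>x\<in>{x. v \<bullet> x = 0}. G *v x = 0 \<longrightarrow> x = 0"
  proof safe
    fix x assume x: "v \<bullet> x = 0" "G *v x = 0"
    then have "x \<in> span {v}" using ker by auto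
    then obtain k where k: "x = k *\<^sub>R v" by (auto simp: span_singleton)
    have "v \<bullet> v = 1" using vnorm by (simp add: power2_norm_eq_inner[symmetric])
    then have "k = 0" using x(1) k by simp
    then show "x = 0" using k by simp
  qed
  obtain e where e: "e > 0" "\<And>x. v \<bullet> x = 0 \<Longrightarrow> e * norm x \<le> norm (G *v x)"
    using injective_imp_isometric[OF closed_hyperplane[of v 0] subspace_hyperplane
        matrix_vector_mul_bounded_linear inj] by auto
  define vm where "vm = Min (range (\<lambda>i. v$i))"
  have vm: "vm > 0" unfolding vm_def using vpos by (subst Min_gr_iff) auto
  have vmle: "vm \<le> v$i" for i unfolding vm_def by (rule Min_le) auto
  have "osc a \<le> (2 / (vm * e)) * norm (G *v a)" for a
  proof -
    define b where "b = a + (- (v \<bullet> a)) *\<^sub>R v"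
    have "v \<bullet> v = 1" using vnorm by (simp add: power2_norm_eq_inner[symmetric])
    then have vb: "v \<bullet> b = 0" unfolding b_def by (simp add: inner_add_right inner_diff_right)
    have Gb: "G *v b = G *v a"
      unfolding b_def by (simp add: matrix_vector_right_distrib matrix_vector_mult_diff_distrib matrix_vector_mult_scaleR Gv)
    have ob: "osc a = osc b" unfolding b_def osc_shift ..
    have bi: "\<bar>b$i / v$i\<bar> \<le> norm b / vm" for i
    proof -
      have "\<bar>b$i / v$i\<bar> = \<bar>b$i\<bar> / v$i" using vpos[of i] by simp
      also have "\<dots> \<le> norm b / v$i" using vpos[of i] component_le_norm_cart[of b i]
        by (simp add: divide_right_mono)
      also have "\<dots> \<le> norm b / vm" using vm vmle[of i] by (simp add: frac_le)
      finally show ?thesis .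
    qed
    have b1: "b$i/v$i \<le> norm b / vm" for i using bi[of i] by (metis abs_le_iff)
    have b2: "- (norm b / vm) \<le> b$i/v$i" for i using bi[of i] by (metis abs_le_iff minus_le_iff)
    have "osc b \<le> 2 * norm b / vm"
      by (rule osc_le_up_lo[OF b1 b2]) simp
    also have "\<dots> \<le> 2 * (norm (G *v b) / e) / vm"
      using e(2)[OF vb] e(1) vm by (intro divide_right_mono mult_left_mono) (auto simp: field_simps)
    also have "\<dots> = (2 / (vm * e)) * norm (G *v a)" using Gb by simp
    finally show ?thesis using ob by simp
  qed
  moreover have "2 / (vm * e) > 0" using vm e by simp
  ultimately show ?thesis by blast
qed

end

locale crn2 = crn G R \<sigma> v for G :: "real^'m^'n" and R :: "real^'n \<Rightarrow> real^'m" and \<sigma> :: "real^'n" and v :: "real^'m" +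
  assumes Rcont: "continuous_on nonneg_orthant R"
  and sm: "\<forall>\<xi>1 \<xi>2 x1 x2.
         fwd_solution (\<lambda>x. R (\<sigma> + G *v x)) {x. \<sigma> + G *v x \<in> nonneg_orthant} \<xi>1 x1 \<and>
         fwd_solution (\<lambda>x. R (\<sigma> + G *v x)) {x. \<sigma> + G *v x \<in> nonneg_orthant} \<xi>2 x2 \<and>
         (\<forall>i. \<xi>2 $ i \<le> \<xi>1 $ i) \<and> \<xi>1 \<noteq> \<xi>2
         \<longrightarrow> (\<forall>t>0. \<forall>i. x2 t $ i < x1 t $ i)"
begin

definition X where "X = {x. \<sigma> + G *v x \<in> nonneg_orthant}"
abbreviation sol where "sol \<xi> x \<equiv> fwd_solution (\<lambda>x. R (\<sigma> + G *v x)) X \<xi> x"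

lemma sm': "sol \<xi>1 x1 \<Longrightarrow> sol \<xi>2 x2 \<Longrightarrow> (\<forall>i. \<xi>2$i \<le> \<xi>1$i) \<Longrightarrow> \<xi>1 \<noteq> \<xi>2 \<Longrightarrow> 0 < t
  \<Longrightarrow> x2 t $ i < x1 t $ i"
  using sm unfolding X_def by blast

lemma sol_shift_v: "sol \<xi> x \<Longrightarrow> sol (\<xi> + c *\<^sub>R v) (\<lambda>t. x t + c *\<^sub>R v)"
  unfolding fwd_solution_def X_def
  by (auto simp: matrix_vector_right_distrib matrix_vector_mult_scaleR Gv
      intro!: derivative_eq_intros)

lemma sol_shift_t: assumes "sol \<xi> x" "0 \<le> s" shows "sol (x s) (\<lambda>t. x (s + t))"
  unfolding fwd_solution_def
proof safe
  fix t :: real assume t: "0 \<le> t"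
  show "x (s + t) \<in> X" using assms t unfolding fwd_solution_def by auto
  have d: "((\<lambda>t. s + t) has_vector_derivative 1) (at t within {0..})"
    by (auto intro!: derivative_eq_intros)
  have "(x has_vector_derivative R (\<sigma> + G *v x (s + t))) (at (s + t) within {0..})"
    using assms t unfolding fwd_solution_def by auto
  then have "(x has_vector_derivative R (\<sigma> + G *v x (s + t))) (at (s + t) within (\<lambda>t. s + t) ` {0..})"
    by (rule has_vector_derivative_within_subset) (use assms in auto)
  from vector_diff_chain_within[OF d this]
  show "((\<lambda>t. x (s + t)) has_vector_derivative R (\<sigma> + G *v x (s + t))) (at t within {0..})"
    by (simp add: o_def)
qed simp

lemma sol_unique: assumes x: "sol \<xi> x" and y: "sol \<xi> y" and t: "0 \<le> t" shows "x t = y t"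
proof (cases "t = 0")
  case True then show ?thesis using x y unfolding fwd_solution_def by simp
next
  case False
  then have t: "t > 0" using t by simp
  have le: "y t $ i \<le> x t $ i" if x: "sol \<xi> x" and y: "sol \<xi> y" for x y i
  proof (rule ccontr)
    assume nle: "\<not> y t $ i \<le> x t $ i"
    define c where "c = (y t $ i - x t $ i) / v$i"
    have c: "c > 0" using nle vpos[of i] unfolding c_def by simp
    have "y t $ i < (x t + c *\<^sub>R v) $ i"
    proof (rule sm'[OF sol_shift_v[OF x] y _ _ t])
      show "\<forall>j. \<xi> $ j \<le> (\<xi> + c *\<^sub>R v) $ j" using c vpos by (simp add: less_imp_le)
      have "(\<xi> + c *\<^sub>R v) $ i \<noteq> \<xi> $ i" using c vpos[of i] by simp
      then show "\<xi> + c *\<^sub>R v \<noteq> \<xi>" by metis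
    qed
    then show False using vpos[of i] unfolding c_def by simp
  qed
  show ?thesis using le[OF x y] le[OF y x] by (simp add: vec_eq_iff antisym)
qed

lemma sol_mono: assumes "sol \<xi>1 x1" "sol \<xi>2 x2" "\<forall>i. \<xi>2$i \<le> \<xi>1$i" "0 \<le> t"
  shows "x2 t $ i \<le> x1 t $ i"
proof (cases "\<xi>1 = \<xi>2")
  case True then show ?thesis using sol_unique[OF assms(1)] assms(2,4) by simp
next
  case False
  show ?thesis
  proof (cases "t = 0")
    case True then show ?thesis using assms unfolding fwd_solution_def by simp
  next
    case False
    then show ?thesis using sm'[OF assms(1-3) \<open>\<xi>1 \<noteq> \<xi>2\<close>, of t i] assms(4) by simp
  qed
qed

lemma osc_mono0: assumes x: "sol \<xi> x" and y: "sol \<eta> y" and t: "0 \<le> t"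
  shows "osc (x t - y t) \<le> osc (\<xi> - \<eta>)"
proof -
  define u where "u = up (\<xi> - \<eta>)"
  define l where "l = lo (\<xi> - \<eta>)"
  have h1: "x t $ i \<le> (y t + u *\<^sub>R v) $ i" for i
    by (rule sol_mono[OF sol_shift_v[OF y] x _ t]) (use le_up_add in \<open>auto simp: u_def\<close>)
  have 1: "(x t - y t)$i / v$i \<le> u" for i using h1[of i] vpos[of i] by (simp add: divide_le_eq)
  have h2: "(y t + l *\<^sub>R v) $ i \<le> x t $ i" for i
    by (rule sol_mono[OF x sol_shift_v[OF y] _ t]) (use lo_le_add in \<open>auto simp: l_def\<close>)
  have 2: "l \<le> (x t - y t)$i / v$i" for i using h2[of i] vpos[of i] by (simp add: le_divide_eq)
  show ?thesis by (rule osc_le_up_lo[OF 1 2]) (simp add: osc_def u_def l_def)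
qed

lemma osc_strict0: assumes x: "sol \<xi> x" and y: "sol \<eta> y" and t: "0 < t" and p: "0 < osc (\<xi> - \<eta>)"
  shows "osc (x t - y t) < osc (\<xi> - \<eta>)"
proof -
  define u where "u = up (\<xi> - \<eta>)"
  define l where "l = lo (\<xi> - \<eta>)"
  have ne: "\<eta> + u *\<^sub>R v \<noteq> \<xi>"
  proof
    assume "\<eta> + u *\<^sub>R v = \<xi>"
    then have "\<xi> - \<eta> = u *\<^sub>R v" by (simp add: algebra_simps)
    then show False using p osc_smult_v by simp
  qed
  have h3: "x t $ i < (y t + u *\<^sub>R v) $ i" for i
    by (rule sm'[OF sol_shift_v[OF y] x _ ne t]) (use le_up_add in \<open>auto simp: u_def\<close>)
  have "(x t - y t)$i / v$i < u" for i using h3[of i] vpos[of i] by (simp add: divide_less_eq)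
  then have 1: "up (x t - y t) < u" using up_less_iff by blast
  have h2: "(y t + l *\<^sub>R v) $ i \<le> x t $ i" for i
    by (rule sol_mono[OF x sol_shift_v[OF y] _]) (use lo_le_add t in \<open>auto simp: l_def\<close>)
  have "l \<le> (x t - y t)$i / v$i" for i using h2[of i] vpos[of i] by (simp add: le_divide_eq)
  then have 2: "l \<le> lo (x t - y t)" using le_lo_iff by blast
  show ?thesis using 1 2 unfolding osc_def u_def l_def by linarith
qed

lemma osc_mono: assumes x: "sol \<xi> x" and y: "sol \<eta> y" and "0 \<le> s" "s \<le> t"
  shows "osc (x t - y t) \<le> osc (x s - y s)"
  using osc_mono0[OF sol_shift_t[OF x \<open>0 \<le> s\<close>] sol_shift_t[OF y \<open>0 \<le> s\<close>], of "t - s"] assms(3,4)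
  by simp

lemma osc_strict: assumes x: "sol \<xi> x" and y: "sol \<eta> y" and "0 \<le> s" "s < t" "0 < osc (x s - y s)"
  shows "osc (x t - y t) < osc (x s - y s)"
  using osc_strict0[OF sol_shift_t[OF x \<open>0 \<le> s\<close>] sol_shift_t[OF y \<open>0 \<le> s\<close>], of "t - s"] assms(3-5)
  by simp

end

context crn2 begin

lemma lift: assumes S: "fwd_solution (\<lambda>S. G *v R S) nonneg_orthant \<rho> S" and \<rho>: "\<rho> = \<sigma> + G *v \<xi>"
  shows "\<exists>x. sol \<xi> x \<and> (\<forall>t\<ge>0. S t = \<sigma> + G *v x t)"
proof -
  have Sd: "\<And>t. 0 \<le> t \<Longrightarrow> (S has_vector_derivative G *v R (S t)) (at t within {0..})"
    and Sin: "\<And>t. 0 \<le> t \<Longrightarrow> S t \<in> nonneg_orthant" and S0: "S 0 = \<rho>"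
    using S unfolding fwd_solution_def by auto
  have Scont: "continuous_on {0..} S"
    unfolding continuous_on_eq_continuous_within
    using Sd has_vector_derivative_continuous by fastforce
  have RS: "continuous_on {0..} (\<lambda>s. R (S s))"
    by (rule continuous_on_compose2[OF Rcont Scont]) (use Sin in auto)
  define x where "x t = \<xi> + integral {0..t} (\<lambda>s. R (S s))" for t
  have key: "\<sigma> + G *v x t = S t \<and> (x has_vector_derivative R (S t)) (at t within {0..})" if t: "0 \<le> t" for t
  proof
    have RSt: "continuous_on {0..t} (\<lambda>s. R (S s))" by (rule continuous_on_subset[OF RS]) auto
    have I: "((\<lambda>s. R (S s)) has_integral integral {0..t} (\<lambda>s. R (S s))) {0..t}"
      using integrable_continuous_real[OF RSt] by (rule integrable_integral)
    have I2: "((\<lambda>s. G *v R (S s)) has_integral G *v integral {0..t} (\<lambda>s. R (S s))) {0..t}"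
      using has_integral_linear[OF I matrix_vector_mul_bounded_linear[of G]] by (simp add: o_def)
    have I3: "((\<lambda>s. G *v R (S s)) has_integral S t - S 0) {0..t}"
      by (rule fundamental_theorem_of_calculus[OF t])
        (auto intro: has_vector_derivative_within_subset[OF Sd])
    have "G *v integral {0..t} (\<lambda>s. R (S s)) = S t - S 0"
      using has_integral_unique[OF I2 I3] .
    then show "\<sigma> + G *v x t = S t"
      unfolding x_def using S0 \<rho> by (simp add: matrix_vector_right_distrib)
    have d: "((\<lambda>u. integral {0..u} (\<lambda>s. R (S s))) has_vector_derivative R (S t)) (at t within {0..t+1})"
      by (rule integral_has_vector_derivative) (use t continuous_on_subset[OF RS] in auto)
    have "at t within {0..t+1} = at t within {0..}"
      by (rule at_within_nhd[of _ "{..<t+1}"]) auto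
    with d have "((\<lambda>u. integral {0..u} (\<lambda>s. R (S s))) has_vector_derivative R (S t)) (at t within {0..})"
      by simp
    then show "(x has_vector_derivative R (S t)) (at t within {0..})"
      unfolding x_def[abs_def] by (auto intro!: derivative_eq_intros)
  qed
  have "sol \<xi> x"
    unfolding fwd_solution_def X_def
  proof (intro conjI allI impI)
    show "x 0 = \<xi>" by (simp add: x_def)
    fix t :: real assume t: "0 \<le> t"
    show "x t \<in> {x. \<sigma> + G *v x \<in> nonneg_orthant}" using key[OF t] Sin[OF t] by simp
    show "(x has_vector_derivative R (\<sigma> + G *v x t)) (at t within {0..})" using key[OF t] by simp
  qed
  then show ?thesis using key by metis
qed

end

context crn2 begin

lemma osc3: "osc (a - d) \<le> osc (a - b) + osc (b - c) + osc (c - d)"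
proof -
  have "a - d = (a - b) + (b - c) + (c - d)" by simp
  then show ?thesis using osc_add[of "a - b + (b - c)" "c - d"] osc_add[of "a - b" "b - c"] by simp
qed

lemma main: assumes x: "sol \<xi> x" and bd: "bounded ((\<lambda>t. G *v x t) ` {0..})"
  and ex: "\<And>q. q \<in> X \<Longrightarrow> \<exists>y. sol q y"
  shows "\<exists>q\<in>X. (\<forall>y. sol q y \<longrightarrow> (\<forall>t\<ge>0. osc (y t - q) = 0)) \<and> ((\<lambda>t. G *v x t) \<longlongrightarrow> G *v q) at_top"
proof -
  have "bounded (range (\<lambda>k::nat. G *v x (real k)))"
    by (rule bounded_subset[OF bd]) auto
  then obtain w r where r: "strict_mono r" and lim: "((\<lambda>k::nat. G *v x (real k)) \<circ> r) \<longlonglongrightarrow> w"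
    using bounded_imp_convergent_subsequence by blast
  define tk where "tk k = real (r k)" for k
  have lim': "(\<lambda>k. G *v x (tk k)) \<longlonglongrightarrow> w" using lim by (simp add: tk_def o_def)
  have tk0: "0 \<le> tk k" for k by (simp add: tk_def)
  have tkS: "tk k + 1 \<le> tk (Suc k)" for k
    using strict_monoD[OF r, of k "Suc k"] by (simp add: tk_def)
  have "closed (range (\<lambda>z. G *v z))"
    by (rule closed_subspace[OF linear_subspace_image[OF matrix_vector_mul_linear subspace_UNIV]])
  then have "w \<in> range (\<lambda>z. G *v z)"
    by (rule closed_sequentially[OF _ _ lim']) auto
  then obtain q where q: "w = G *v q" by blast
  have xX: "x t \<in> X" if "0 \<le> t" for t using x that unfolding fwd_solution_def by auto
  have qX: "q \<in> X"
    unfolding X_def nonneg_orthant_def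
  proof (safe)
    fix i
    have "(\<lambda>k. (\<sigma> + G *v x (tk k)) $ i) \<longlonglongrightarrow> (\<sigma> + G *v q) $ i"
      using lim' q by (intro tendsto_vec_nth tendsto_add tendsto_const) auto
    moreover have "0 \<le> (\<sigma> + G *v x (tk k)) $ i" for k
      using xX[OF tk0[of k]] unfolding X_def nonneg_orthant_def by auto
    ultimately show "0 \<le> (\<sigma> + G *v q) $ i" by (intro LIMSEQ_le_const) auto
  qed
  obtain K2 where K2: "K2 > 0" "\<And>a. osc a \<le> K2 * norm (G *v a)" using osc_le_G by blast
  obtain K1 where K1: "K1 > 0" "\<And>a. norm (G *v a) \<le> K1 * osc a" using G_le_osc by blast
  define e where "e k = osc (x (tk k) - q)" for k
  have e0: "0 \<le> e k" for k unfolding e_def by (rule osc_nonneg)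
  have elim: "e \<longlonglongrightarrow> 0"
  proof (rule Lim_null_comparison)
    show "\<forall>\<^sub>F k in sequentially. norm (e k) \<le> K2 * norm (G *v x (tk k) - w)"
    proof (intro always_eventually allI)
      fix k
      show "norm (e k) \<le> K2 * norm (G *v x (tk k) - w)"
        using K2(2)[of "x (tk k) - q"] e0[of k] by (simp add: e_def q matrix_vector_mult_diff_distrib)
    qed
    have "(\<lambda>k. G *v x (tk k) - w) \<longlonglongrightarrow> 0" using lim' by (simp add: LIM_zero)
    then show "(\<lambda>k. K2 * norm (G *v x (tk k) - w)) \<longlonglongrightarrow> 0"
      by (intro tendsto_mult_right_zero tendsto_norm_zero)
  qed
  have releq: "osc (y \<tau> - q) = 0" if y: "sol q y" and \<tau>: "0 \<le> \<tau>" for y \<tau>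
  proof (rule ccontr)
    assume "osc (y \<tau> - q) \<noteq> 0"
    then have Apos: "0 < osc (y \<tau> - q)" using osc_nonneg[of "y \<tau> - q"] by simp
    have y0: "y 0 = q" using y unfolding fwd_solution_def by simp
    have z: "sol (y \<tau>) (\<lambda>t. y (\<tau> + t))" by (rule sol_shift_t[OF y \<tau>])
    have BA: "osc (y (\<tau> + 1) - y 1) < osc (y \<tau> - q)"
      using osc_strict[OF z y, of 0 1] Apos y0 by simp
    have xt: "sol (x \<tau>) (\<lambda>t. x (\<tau> + t))" by (rule sol_shift_t[OF x \<tau>])
    define a where "a k = osc (x (tk k + \<tau>) - x (tk k))" for k
    define b where "b k = osc (x (tk k + 1 + \<tau>) - x (tk k + 1))" for k
    have ab: "a (Suc k) \<le> b k" for k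
      using osc_mono[OF xt x, of "tk k + 1" "tk (Suc k)"] tk0[of k] tkS[of k]
      unfolding a_def b_def by (simp add: add.commute add.left_commute)
    have xk: "sol (x (tk k)) (\<lambda>t. x (tk k + t))" for k by (rule sol_shift_t[OF x tk0])
    have cmp: "osc (x (tk k + t) - y t) \<le> e k" if "0 \<le> t" for k t
      using osc_mono0[OF xk y that] unfolding e_def .
    have lower: "osc (y \<tau> - q) \<le> a k + 2 * e k" for k
    proof -
      have "osc (y \<tau> - q) \<le> osc (y \<tau> - x (tk k + \<tau>)) + osc (x (tk k + \<tau>) - x (tk k)) + osc (x (tk k) - q)"
        by (rule osc3)
      moreover have "osc (y \<tau> - x (tk k + \<tau>)) \<le> e k" using cmp[OF \<tau>, of k] osc_commute by metis
      ultimately show ?thesis unfolding a_def e_def by simp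
    qed
    have upper: "b k \<le> osc (y (\<tau> + 1) - y 1) + 2 * e k" for k
    proof -
      have "b k \<le> osc (x (tk k + 1 + \<tau>) - y (\<tau> + 1)) + osc (y (\<tau> + 1) - y 1) + osc (y 1 - x (tk k + 1))"
        unfolding b_def by (rule osc3)
      moreover have "osc (x (tk k + 1 + \<tau>) - y (\<tau> + 1)) \<le> e k"
      proof -
        have "tk k + 1 + \<tau> = tk k + (\<tau> + 1)" by simp
        then show ?thesis using cmp[of "\<tau> + 1" k] \<tau> by (simp only:)
      qed
      moreover have "osc (y 1 - x (tk k + 1)) \<le> e k" using cmp[of 1 k] osc_commute by simp
      ultimately show ?thesis by simp
    qed
    have "(\<lambda>k. osc (y \<tau> - q) - osc (y (\<tau> + 1) - y 1) - 2 * e (Suc k) - 2 * e k)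
        \<longlonglongrightarrow> osc (y \<tau> - q) - osc (y (\<tau> + 1) - y 1) - 2 * 0 - 2 * 0"
      by (intro tendsto_intros LIMSEQ_Suc elim)
    moreover have "\<forall>k\<ge>0. osc (y \<tau> - q) - osc (y (\<tau> + 1) - y 1) - 2 * e (Suc k) - 2 * e k \<le> 0"
    proof (intro allI impI)
      fix k :: nat
      show "osc (y \<tau> - q) - osc (y (\<tau> + 1) - y 1) - 2 * e (Suc k) - 2 * e k \<le> 0"
        using lower[of "Suc k"] upper[of k] ab[of k] by linarith
    qed
    ultimately have "osc (y \<tau> - q) - osc (y (\<tau> + 1) - y 1) - 2 * 0 - 2 * 0 \<le> 0"
      by (intro LIMSEQ_le_const2) blast+
    then show False using BA by simp
  qed
  obtain y where y: "sol q y" using ex[OF qX] by blast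
  have bnd: "osc (x t - q) \<le> e k" if "tk k \<le> t" for k t
  proof -
    have "osc (x t - q) \<le> osc (x t - y t) + osc (y t - q)"
      using osc_add[of "x t - y t" "y t - q"] by simp
    also have "osc (y t - q) = 0" using releq[OF y] tk0[of k] that by simp
    also have "osc (x t - y t) \<le> osc (x (tk k) - y (tk k))" by (rule osc_mono[OF x y tk0 that])
    also have "\<dots> \<le> osc (x (tk k) - q) + osc (q - y (tk k))"
      using osc_add[of "x (tk k) - q" "q - y (tk k)"] by simp
    also have "osc (q - y (tk k)) = 0" using releq[OF y tk0[of k]] osc_commute by metis
    finally show ?thesis unfolding e_def by simp
  qed
  have "((\<lambda>t. G *v x t) \<longlongrightarrow> G *v q) at_top"
  proof (rule tendstoI)
    fix \<epsilon> :: real assume \<epsilon>: "\<epsilon> > 0"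
    have "\<forall>\<^sub>F k in sequentially. e k < \<epsilon> / K1" using elim \<epsilon> K1(1) by (intro order_tendstoD(2)) auto
    then obtain k where k: "e k < \<epsilon> / K1" by (auto simp: eventually_sequentially)
    show "\<forall>\<^sub>F t in at_top. dist (G *v x t) (G *v q) < \<epsilon>"
      unfolding eventually_at_top_linorder
    proof (intro exI allI impI)
      fix t assume t: "tk k \<le> t"
      have "dist (G *v x t) (G *v q) = norm (G *v (x t - q))"
        by (simp add: dist_norm matrix_vector_mult_diff_distrib)
      also have "\<dots> \<le> K1 * osc (x t - q)" by (rule K1(2))
      also have "\<dots> \<le> K1 * e k" using bnd[OF t] K1(1) by simp
      also have "\<dots> < \<epsilon>" using k K1(1) by (simp add: field_simps)
      finally show "dist (G *v x t) (G *v q) < \<epsilon>" .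
    qed
  qed
  then show ?thesis using qX releq by blast
qed

end


context crn2 begin
lemma releq_unique: assumes "sol q0 y0" "sol q y" "\<forall>t\<ge>0. osc (y0 t - q0) = 0" "\<forall>t\<ge>0. osc (y t - q) = 0"
  shows "G *v q0 = G *v q"
proof -
  have "osc (q0 - q) = 0"
  proof (rule ccontr)
    assume "osc (q0 - q) \<noteq> 0"
    then have p: "0 < osc (q0 - q)" using osc_nonneg[of "q0 - q"] by simp
    have "osc (y0 1 - y 1) < osc (q0 - q)" by (rule osc_strict0[OF assms(1,2) _ p]) simp
    moreover have "osc (q0 - q) \<le> osc (q0 - y0 1) + osc (y0 1 - y 1) + osc (y 1 - q)" by (rule osc3)
    moreover have "osc (q0 - y0 1) = 0" using assms(3) osc_commute by (metis zero_le_one)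
    moreover have "osc (y 1 - q) = 0" using assms(4) by simp
    ultimately show False by simp
  qed
  moreover obtain K1 where K1: "K1 > 0" "\<And>a. norm (G *v a) \<le> K1 * osc a" using G_le_osc by blast
  ultimately have "norm (G *v (q0 - q)) \<le> 0" using K1(2)[of "q0 - q"] by simp
  then show ?thesis by (simp add: matrix_vector_mult_diff_distrib)
qed
end

theorem corollary3:
  fixes \<Gamma> :: "real^'m^'n" and R :: "real^'n \<Rightarrow> real^'m" and \<sigma> :: "real^'n"
  assumes lip: "loc_lipschitz_on nonneg_orthant R"
    and inv_complete: "\<forall>\<rho>\<in>nonneg_orthant. \<exists>S. fwd_solution (\<lambda>S. \<Gamma> *v R S) nonneg_orthant \<rho> S"
    and rank: "rank \<Gamma> = CARD('m) - 1"
    and kernel: "\<exists>v::real^'m. norm v = 1 \<and> (\<forall>i. 0 < v $ i) \<and> {x. \<Gamma> *v x = 0} = span {v}"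
    and bounded: "\<forall>\<rho> S. fwd_solution (\<lambda>S. \<Gamma> *v R S) nonneg_orthant \<rho> S \<longrightarrow> bounded (S ` {0..})"
    and sigma: "\<sigma> \<in> nonneg_orthant"
    and strongly_monotone:
      "\<forall>\<xi>1 \<xi>2 x1 x2.
         fwd_solution (\<lambda>x. R (\<sigma> + \<Gamma> *v x)) {x. \<sigma> + \<Gamma> *v x \<in> nonneg_orthant} \<xi>1 x1 \<and>
         fwd_solution (\<lambda>x. R (\<sigma> + \<Gamma> *v x)) {x. \<sigma> + \<Gamma> *v x \<in> nonneg_orthant} \<xi>2 x2 \<and>
         (\<forall>i. \<xi>2 $ i \<le> \<xi>1 $ i) \<and> \<xi>1 \<noteq> \<xi>2
         \<longrightarrow> (\<forall>t>0. \<forall>i. x2 t $ i < x1 t $ i)"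
  shows "\<exists>\<zeta>\<in>nonneg_orthant. \<forall>\<rho>\<in>nonneg_orthant. \<rho> - \<sigma> \<in> range (\<lambda>x. \<Gamma> *v x) \<longrightarrow>
           (\<forall>S. fwd_solution (\<lambda>S. \<Gamma> *v R S) nonneg_orthant \<rho> S \<longrightarrow> (S \<longlongrightarrow> \<zeta>) at_top)"
proof -
  obtain v :: "real^'m" where v: "norm v = 1" "\<forall>i. 0 < v $ i" "{x. \<Gamma> *v x = 0} = span {v}"
    using kernel by blast
  have Rcont: "continuous_on nonneg_orthant R"
    unfolding continuous_on_eq_continuous_within
  proof
    fix x :: "real^'n" assume x: "x \<in> nonneg_orthant"
    obtain e L where e: "e > 0" "L-lipschitz_on (cball x e \<inter> nonneg_orthant) R"
      using lip x unfolding loc_lipschitz_on_def by blast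
    have "continuous (at x within (cball x e \<inter> nonneg_orthant)) R"
      using lipschitz_on_continuous_on[OF e(2)] x e(1)
      unfolding continuous_on_eq_continuous_within by auto
    moreover have "at x within nonneg_orthant = at x within (cball x e \<inter> nonneg_orthant)"
      by (rule at_within_nhd[of _ "ball x e"]) (use e(1) in auto)
    ultimately show "continuous (at x within nonneg_orthant) R" by simp
  qed
  interpret crn2 \<Gamma> R \<sigma> v
    by unfold_locales (use v Rcont strongly_monotone in auto)
  have ex: "\<exists>y. sol q y" if "q \<in> X" for q
  proof -
    have "\<sigma> + \<Gamma> *v q \<in> nonneg_orthant" using that by (simp add: X_def)
    then obtain S where "fwd_solution (\<lambda>S. \<Gamma> *v R S) nonneg_orthant (\<sigma> + \<Gamma> *v q) S"
      using inv_complete by blast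
    from lift[OF this refl] show ?thesis by blast
  qed
  have conv: "\<exists>q\<in>X. (\<forall>y. sol q y \<longrightarrow> (\<forall>t\<ge>0. osc (y t - q) = 0)) \<and> (S \<longlongrightarrow> \<sigma> + \<Gamma> *v q) at_top"
    if S: "fwd_solution (\<lambda>S. \<Gamma> *v R S) nonneg_orthant \<rho> S" and \<rho>: "\<rho> = \<sigma> + \<Gamma> *v \<xi>" for \<rho> S \<xi>
  proof -
    obtain x where x: "sol \<xi> x" and Sx: "\<forall>t\<ge>0. S t = \<sigma> + \<Gamma> *v x t" using lift[OF S \<rho>] by blast
    have "bounded ((\<lambda>z. - \<sigma> + z) ` (S ` {0..}))"
      using bounded S by (intro bounded_translation) blast
    moreover have "(\<lambda>t. \<Gamma> *v x t) ` {0..} \<subseteq> (\<lambda>z. - \<sigma> + z) ` (S ` {0..})"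
      using Sx by force
    ultimately have bd: "bounded ((\<lambda>t. \<Gamma> *v x t) ` {0..})" by (rule bounded_subset)
    obtain q where q: "q \<in> X" "\<forall>y. sol q y \<longrightarrow> (\<forall>t\<ge>0. osc (y t - q) = 0)"
      "((\<lambda>t. \<Gamma> *v x t) \<longlongrightarrow> \<Gamma> *v q) at_top"
      using main[OF x bd ex] by blast
    have "((\<lambda>t. \<sigma> + \<Gamma> *v x t) \<longlongrightarrow> \<sigma> + \<Gamma> *v q) at_top"
      by (intro tendsto_add tendsto_const q(3))
    moreover have "\<forall>\<^sub>F t in at_top. \<sigma> + \<Gamma> *v x t = S t"
      unfolding eventually_at_top_linorder using Sx by (intro exI[of _ 0]) auto
    ultimately have "(S \<longlongrightarrow> \<sigma> + \<Gamma> *v q) at_top" by (rule Lim_transform_eventually)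
    then show ?thesis using q by blast
  qed
  obtain S0 where S0: "fwd_solution (\<lambda>S. \<Gamma> *v R S) nonneg_orthant \<sigma> S0"
    using inv_complete sigma by blast
  obtain q0 where q0: "q0 \<in> X" "\<forall>y. sol q0 y \<longrightarrow> (\<forall>t\<ge>0. osc (y t - q0) = 0)"
    using conv[OF S0, of 0] by auto
  obtain y0 where y0: "sol q0 y0" using ex[OF q0(1)] by blast
  show ?thesis
  proof (intro bexI ballI impI allI)
    show "\<sigma> + \<Gamma> *v q0 \<in> nonneg_orthant" using q0(1) by (simp add: X_def)
    fix \<rho> S assume \<rho>: "\<rho> \<in> nonneg_orthant" "\<rho> - \<sigma> \<in> range (\<lambda>x. \<Gamma> *v x)"
      and S: "fwd_solution (\<lambda>S. \<Gamma> *v R S) nonneg_orthant \<rho> S"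
    obtain \<xi> where \<xi>: "\<rho> - \<sigma> = \<Gamma> *v \<xi>" using \<rho>(2) by blast
    then have "\<rho> = \<sigma> + \<Gamma> *v \<xi>" by (simp add: algebra_simps)
    from conv[OF S this] obtain q where q: "q \<in> X" "\<forall>y. sol q y \<longrightarrow> (\<forall>t\<ge>0. osc (y t - q) = 0)"
      "(S \<longlongrightarrow> \<sigma> + \<Gamma> *v q) at_top" by blast
    obtain y where y: "sol q y" using ex[OF q(1)] by blast
    have "\<Gamma> *v q0 = \<Gamma> *v q" using releq_unique[OF y0 y] q0(2) q(2) y0 y by blast
    then show "(S \<longlongrightarrow> \<sigma> + \<Gamma> *v q0) at_top" using q(3) by simp
  qed
qed

end
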